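(* Let $\rho$ be the canonical rank-$\le2$ state with parameters $\theta,\phi,\alpha,\beta,\nu_1,\nu_2$. Then: (i) if $\phi=0$, $\mathcal C(\rho)=|\nu_2\sin2\alpha-\nu_1\sin2\theta|$; (ii) if $\phi=\pi/2$, $\mathcal C(\rho)=|\nu_1-\nu_2|\sin2\theta$; (iii) if $\sin2\alpha=0$, $\mathcal C(\rho)=\sin2\theta\,|\nu_1-\nu_2\sin^2\phi|$.
   Context: Qubits are labelled so that the first tensor factor belongs to Alice and the second to Bob; $\{|0\rangle,|1\rangle\}$ is the computational basis and $|ij\rangle=|i\rangle\otimes|j\rangle$. For parameters $\theta,\phi,\alpha\in[0,\pi/2]$, $\beta\in[0,2\pi]$ and weights $\nu_1,\nu_2\in[0,1]$ with $\nu_1+\nu_2=1$, set $|\psi_1\rangle=\cos\theta|00\rangle+\sin\theta|11\rangle$, $|\psi_2\rangle=\cos\phi(\cos\alpha|01\rangle+\sin\alpha|10\rangle)+e^{i\beta}\sin\phi(\sin\theta|00\rangle-\cos\theta|11\rangle)$, and $\rho=\nu_1|\psi_1\rangle\langle\psi_1|+\nu_2|\psi_2\rangle\langle\psi_2|$ (the canonical rank-$\le2$ state). The concurrence of a two-qubit density matrix $\rho$ is $\mathcal C(\rho)=\max\{0,\lambda_1-\lambda_2-\lambda_3-\lambda_4\}$, where $\lambda_1\ge\lambda_2\ge\lambda_3\ge\lambda_4$ are the eigenvalues of $\sqrt{\sqrt\rho\,\tilde\rho\,\sqrt\rho}$, $\tilde\rho=(\sigma_y\otimes\sigma_y)\rho^*(\sigma_y\otimes\sigma_y)$,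 $\rho^*$ is the entrywise complex conjugate in the computational basis, and $\sigma_x,\sigma_y,\sigma_z$ are the Pauli matrices. A two-qubit state is entangled iff its concurrence is positive. *)

theory Defs
  imports "Jordan_Normal_Form.Char_Poly"
begin

text \<open>Two-qubit states live in C^4 = C^2 (x) C^2; index 2*i+j corresponds to |ij>
  (first factor Alice, second Bob), consistent with the Kronecker product below.\<close>

definition ket :: "nat \<Rightarrow> nat \<Rightarrow> complex vec" where
  "ket i j = unit_vec 4 (2 * i + j)"

definition proj :: "complex vec \<Rightarrow> complex mat" where
  "proj v = mat (dim_vec v) (dim_vec v) (\<lambda>(i, j). v $ i * cnj (v $ j))"

definition adjoint_mat :: "complex mat \<Rightarrow> complex mat" where
  "adjoint_mat A = mat (dim_col A) (dim_row A) (\<lambda>(i, j). cnj (A $$ (j, i)))"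

definition conj_mat :: "complex mat \<Rightarrow> complex mat" where
  "conj_mat A = map_mat cnj A"

definition kron2 :: "complex mat \<Rightarrow> complex mat \<Rightarrow> complex mat" where
  "kron2 A B = mat 4 4 (\<lambda>(r, c). A $$ (r div 2, c div 2) * B $$ (r mod 2, c mod 2))"

definition sigma_y :: "complex mat" where
  "sigma_y = mat_of_rows_list 2 [[0, -\<i>], [\<i>, 0]]"

definition psd :: "nat \<Rightarrow> complex mat \<Rightarrow> bool" where
  "psd n A \<longleftrightarrow> A \<in> carrier_mat n n \<and> adjoint_mat A = A \<and>
     (\<forall>v \<in> carrier_vec n. Im (conjugate v \<bullet> (A *\<^sub>v v)) = 0 \<and> 0 \<le> Re (conjugate v \<bullet> (A *\<^sub>v v)))"

definition msqrt :: "complex mat \<Rightarrow> complex mat" where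
  "msqrt A = (THE B. psd (dim_row A) B \<and> B * B = A)"

definition spin_flip :: "complex mat \<Rightarrow> complex mat" where
  "spin_flip \<rho> = kron2 sigma_y sigma_y * conj_mat \<rho> * kron2 sigma_y sigma_y"

definition conc_eigs :: "complex mat \<Rightarrow> real list" where
  "conc_eigs \<rho> = (let R = msqrt (msqrt \<rho> * spin_flip \<rho> * msqrt \<rho>) in
     THE l. length l = 4 \<and> sorted_wrt (\<ge>) l \<and>
       char_poly R = prod_list (map (\<lambda>x. [:- complex_of_real x, 1:]) l))"

definition concurrence :: "complex mat \<Rightarrow> real" where
  "concurrence \<rho> = (let l = conc_eigs \<rho> in max 0 (l!0 - l!1 - l!2 - l!3))"

definition psi1 :: "real \<Rightarrow> complex vec" where
  "psi1 \<theta> = complex_of_real (cos \<theta>) \<cdot>\<^sub>v ket 0 0 + complex_of_real (sin \<theta>) \<cdot>\<^sub>v ket 1 1"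

definition psi2 :: "real \<Rightarrow> real \<Rightarrow> real \<Rightarrow> real \<Rightarrow> complex vec" where
  "psi2 \<theta> \<phi> \<alpha> \<beta> =
     complex_of_real (cos \<phi>) \<cdot>\<^sub>v (complex_of_real (cos \<alpha>) \<cdot>\<^sub>v ket 0 1 + complex_of_real (sin \<alpha>) \<cdot>\<^sub>v ket 1 0)
   + (cis \<beta> * complex_of_real (sin \<phi>)) \<cdot>\<^sub>v
       (complex_of_real (sin \<theta>) \<cdot>\<^sub>v ket 0 0 - complex_of_real (cos \<theta>) \<cdot>\<^sub>v ket 1 1)"

definition canon_state :: "real \<Rightarrow> real \<Rightarrow> real \<Rightarrow> real \<Rightarrow> real \<Rightarrow> real \<Rightarrow> complex mat" where
  "canon_state \<theta> \<phi> \<alpha> \<beta> \<nu>1 \<nu>2 =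
     complex_of_real \<nu>1 \<cdot>\<^sub>m proj (psi1 \<theta>) + complex_of_real \<nu>2 \<cdot>\<^sub>m proj (psi2 \<theta> \<phi> \<alpha> \<beta>)"

end

theory Submission
  imports Defs
begin

lemma adjoint_dims[simp]: "dim_row (adjoint_mat A) = dim_col A" "dim_col (adjoint_mat A) = dim_row A"
  by (auto simp: adjoint_mat_def)

lemma adjoint_carrier[simp]: "A \<in> carrier_mat n m \<Longrightarrow> adjoint_mat A \<in> carrier_mat m n"
  by (auto simp: adjoint_mat_def)

lemma adjoint_index[simp]: "i < dim_col A \<Longrightarrow> j < dim_row A \<Longrightarrow> adjoint_mat A $$ (i,j) = cnj (A $$ (j,i))"
  by (auto simp: adjoint_mat_def)

lemma adjoint_adjoint[simp]: "adjoint_mat (adjoint_mat A) = A"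
  by (rule eq_matI, auto)

lemma adjoint_mult: assumes "A \<in> carrier_mat n m" "B \<in> carrier_mat m k"
  shows "adjoint_mat (A * B) = adjoint_mat B * adjoint_mat A"
  using assms by (intro eq_matI) (auto simp: scalar_prod_def mult.commute)

lemma adjoint_minus: assumes "A \<in> carrier_mat n m" "B \<in> carrier_mat n m"
  shows "adjoint_mat (A - B) = adjoint_mat A - adjoint_mat B"
  using assms by (intro eq_matI) auto

lemma quad_move: assumes A: "A \<in> carrier_mat n n" and v: "v \<in> carrier_vec n" and w: "w \<in> carrier_vec n"
  shows "conjugate v \<bullet> (A *\<^sub>v w) = conjugate (adjoint_mat A *\<^sub>v v) \<bullet> w"
proof -
  have "conjugate v \<bullet> (A *\<^sub>v w) = (\<Sum>i<n. cnj (v $ i) * (\<Sum>j<n. A $$ (i,j) * w $ j))"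
    using A v w by (simp add: scalar_prod_def lessThan_atLeast0)
  also have "\<dots> = (\<Sum>i<n. \<Sum>j<n. cnj (v $ i) * A $$ (i,j) * w $ j)"
    by (simp add: sum_distrib_left mult.assoc)
  also have "\<dots> = (\<Sum>j<n. \<Sum>i<n. cnj (v $ i) * A $$ (i,j) * w $ j)"
    by (rule sum.swap)
  also have "\<dots> = conjugate (adjoint_mat A *\<^sub>v v) \<bullet> w"
    using A v w by (simp add: scalar_prod_def lessThan_atLeast0 sum_distrib_left ac_simps)
  finally show ?thesis .
qed

lemma psdD: assumes "psd n A"
  shows "A \<in> carrier_mat n n" "adjoint_mat A = A"
    "v \<in> carrier_vec n \<Longrightarrow> 0 \<le> conjugate v \<bullet> (A *\<^sub>v v)"
  using assms unfolding psd_def by (auto simp: less_eq_complex_def)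

lemma key_lemma: assumes psd: "psd n M" and v: "v \<in> carrier_vec n"
  and q: "conjugate v \<bullet> (M *\<^sub>v v) = 0"
shows "M *\<^sub>v v = 0\<^sub>v n"
proof -
  note M = psdD(1)[OF psd] and H = psdD(2)[OF psd]
  define w where "w = M *\<^sub>v v"
  have w: "w \<in> carrier_vec n" using M v by (simp add: w_def)
  define a where "a = conjugate w \<bullet> w"
  define b where "b = conjugate w \<bullet> (M *\<^sub>v w)"
  have b0: "0 \<le> b" using psdD(3)[OF psd w] by (simp add: b_def)
  have a0: "0 \<le> a" unfolding a_def using conjugate_vec_sprod_comm[OF w w] conjugate_square_ge_0_vec[of w] by simp
  have e1: "conjugate v \<bullet> (M *\<^sub>v w) = a"
    using quad_move[OF M v w] H by (simp add: a_def w_def)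
  have e2: "conjugate w \<bullet> (M *\<^sub>v v) = a" by (simp add: a_def w_def)
  have main: "0 \<le> 2 * t * a + t * t * b" if t: "t \<in> \<real>" for t
  proof -
    have ct: "cnj t = t" using t by (auto simp: Reals_def)
    let ?x = "v + t \<cdot>\<^sub>v w"
    have x: "?x \<in> carrier_vec n" using v w by simp
    have "conjugate ?x \<bullet> (M *\<^sub>v ?x) = 
      conjugate v \<bullet> (M *\<^sub>v v) + t * (conjugate v \<bullet> (M *\<^sub>v w)) + t * (conjugate w \<bullet> (M *\<^sub>v v)) + t * t * (conjugate w \<bullet> (M *\<^sub>v w))"
      using M v w ct
      apply (simp add: conjugate_add_vec[of _ n] conjugate_smult_vec mult_add_distrib_mat_vec[OF M] mult_mat_vec[OF M]
          add_scalar_prod_distrib[of _ n] scalar_prod_add_distrib[of _ n])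
      apply (simp add: algebra_simps)
      done
    also have "\<dots> = 2 * t * a + t * t * b" using q e1 e2 by (simp add: b_def algebra_simps)
    finally show ?thesis using psdD(3)[OF psd x] by simp
  qed
  have "a = 0"
  proof (rule ccontr)
    assume "a \<noteq> 0"
    with a0 have ap: "Re a > 0" "Im a = 0" by (auto simp: less_eq_complex_def complex_eq_iff)
    have bp: "Re b \<ge> 0" "Im b = 0" using b0 by (auto simp: less_eq_complex_def)
    define t where "t = - Re a / (Re b + 1)"
    have "0 \<le> 2 * complex_of_real t * a + complex_of_real t * complex_of_real t * b"
      by (rule main) simp
    hence "0 \<le> 2 * t * Re a + t * t * Re b" using ap bp by (simp add: less_eq_complex_def)
    moreover have "2 * t * Re a + t * t * Re b < 0"
    proof -
      have d: "Re b + 1 > 0" using bp by simp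
      have tb: "t * Re b = - Re a - t" using d by (simp add: t_def field_simps)
      have tneg: "t < 0" using ap d by (simp add: t_def divide_neg_pos)
      have "2 * t * Re a + t * t * Re b = 2 * t * Re a + t * (t * Re b)" by simp
      also have "\<dots> = t * (Re a - t)" unfolding tb by (simp add: algebra_simps)
      also have "\<dots> < 0" using tneg ap by (intro mult_neg_pos) auto
      finally show ?thesis .
    qed
    ultimately show False by simp
  qed
  hence "w \<bullet>c w = 0" unfolding a_def using conjugate_vec_sprod_comm[OF w w] by simp
  thus ?thesis using w by (simp add: w_def)
qed


lemma trace_comm: fixes A :: "complex mat" assumes "A \<in> carrier_mat n n" "B \<in> carrier_mat n n"
  shows "(\<Sum>i<n. (A * B) $$ (i,i)) = (\<Sum>i<n. (B * A) $$ (i,i))"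
proof -
  have "(\<Sum>i<n. (A * B) $$ (i,i)) = (\<Sum>i<n. \<Sum>k<n. A $$ (i,k) * B $$ (k,i))"
    using assms by (simp add: scalar_prod_def lessThan_atLeast0)
  also have "\<dots> = (\<Sum>k<n. \<Sum>i<n. A $$ (i,k) * B $$ (k,i))" by (rule sum.swap)
  also have "\<dots> = (\<Sum>k<n. \<Sum>i<n. B $$ (k,i) * A $$ (i,k))" by (intro sum.cong refl) (simp add: mult.commute)
  also have "\<dots> = (\<Sum>i<n. (B * A) $$ (i,i))"
    using assms by (simp add: scalar_prod_def lessThan_atLeast0)
  finally show ?thesis .
qed

lemma herm_row_col: assumes "D \<in> carrier_mat n n" "adjoint_mat D = D" "i < n"
  shows "conjugate (col D i) = row D i"
proof (rule eq_vecI)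
  fix j assume "j < dim_vec (row D i)"
  hence j: "j < n" using assms by simp
  have "D $$ (i,j) = adjoint_mat D $$ (i,j)" using assms j by simp
  also have "\<dots> = cnj (D $$ (j,i))" by (rule adjoint_index) (use assms j in auto)
  finally show "conjugate (col D i) $ j = row D i $ j" using assms j by simp
qed (use assms in simp)

lemma quad_diag: assumes D: "D \<in> carrier_mat n n" "adjoint_mat D = D" and B: "B \<in> carrier_mat n n"
  and i: "i < n"
  shows "conjugate (col D i) \<bullet> (B *\<^sub>v col D i) = (D * (B * D)) $$ (i,i)"
proof -
  have "B *\<^sub>v col D i = col (B * D) i" by (rule col_mult2[OF B D(1) i, symmetric])
  thus ?thesis using herm_row_col[OF D i] D B i by simp
qed

lemma psd_sqrt_unique: assumes B: "psd n B" and C: "psd n C" and BC: "B * B = C * C"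
  shows "B = C"
proof -
  note Bc = psdD(1)[OF B] and Cc = psdD(1)[OF C]
  define D where "D = B - C"
  have Dc: "D \<in> carrier_mat n n" using Bc Cc by (simp add: D_def minus_carrier_mat)
  have DH: "adjoint_mat D = D" unfolding D_def using adjoint_minus[OF Bc Cc] psdD(2)[OF B] psdD(2)[OF C] by simp
  have e1: "B * D = - (D * C)"
  proof -
    have "B * D = B * B - B * C" unfolding D_def using Bc Cc by (simp add: mult_minus_distrib_mat)
    moreover have "D * C = B * C - C * C" unfolding D_def using Bc Cc by (simp add: minus_mult_distrib_mat)
    ultimately show ?thesis using BC Bc Cc by (intro eq_matI) auto
  qed
  define qB where "qB i = conjugate (col D i) \<bullet> (B *\<^sub>v col D i)" for i
  define qC where "qC i = conjugate (col D i) \<bullet> (C *\<^sub>v col D i)" for i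
  have qB0: "0 \<le> qB i" if "i < n" for i unfolding qB_def using psdD(3)[OF B] Dc that by simp
  have qC0: "0 \<le> qC i" if "i < n" for i unfolding qC_def using psdD(3)[OF C] Dc that by simp
  have sum0: "(\<Sum>i<n. qB i + qC i) = 0"
  proof -
    have "(\<Sum>i<n. qB i + qC i) = (\<Sum>i<n. (D * (B * D)) $$ (i,i)) + (\<Sum>i<n. (D * (C * D)) $$ (i,i))"
      unfolding qB_def qC_def using quad_diag[OF Dc DH Bc] quad_diag[OF Dc DH Cc] by (simp add: sum.distrib)
    also have "(\<Sum>i<n. (D * (B * D)) $$ (i,i)) = - (\<Sum>i<n. (D * (D * C)) $$ (i,i))"
      unfolding e1 using Dc Cc by (simp add: sum_negf)
    also have "(\<Sum>i<n. (D * (C * D)) $$ (i,i)) = (\<Sum>i<n. ((D * C) * D) $$ (i,i))"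
      using Dc Cc by simp
    also have "\<dots> = (\<Sum>i<n. (D * (D * C)) $$ (i,i))"
      using trace_comm[of "D * C" n D] Dc Cc by simp
    finally show ?thesis by simp
  qed
  have all0: "qB i = 0 \<and> qC i = 0" if i: "i < n" for i
  proof -
    have "\<forall>i\<in>{..<n}. qB i + qC i = 0"
      using sum_nonneg_eq_0_iff[of "{..<n}" "\<lambda>i. qB i + qC i"] sum0 qB0 qC0 by (simp add: add_nonneg_nonneg)
    hence "qB i + qC i = 0" using i by simp
    thus ?thesis using qB0[OF i] qC0[OF i] by (simp add: add_nonneg_eq_0_iff)
  qed
  have BD: "B * D = 0\<^sub>m n n"
  proof (rule eq_matI)
    fix i j assume "i < dim_row (0\<^sub>m n n :: complex mat)" "j < dim_col (0\<^sub>m n n :: complex mat)"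
    hence i: "i < n" and j: "j < n" by auto
    have "B *\<^sub>v col D j = 0\<^sub>v n" using key_lemma[OF B _ conjunct1[OF all0[OF j], unfolded qB_def]] Dc j by simp
    hence "col (B * D) j = 0\<^sub>v n" unfolding col_mult2[OF Bc Dc j] .
    hence "col (B * D) j $ i = 0" using i by simp
    thus "(B * D) $$ (i,j) = 0\<^sub>m n n $$ (i,j)" using i j Bc Dc by simp
  qed (use Bc Dc in auto)
  have CD: "C * D = 0\<^sub>m n n"
  proof (rule eq_matI)
    fix i j assume "i < dim_row (0\<^sub>m n n :: complex mat)" "j < dim_col (0\<^sub>m n n :: complex mat)"
    hence i: "i < n" and j: "j < n" by auto
    have "C *\<^sub>v col D j = 0\<^sub>v n" using key_lemma[OF C _ conjunct2[OF all0[OF j], unfolded qC_def]] Dc j by simp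
    hence "col (C * D) j = 0\<^sub>v n" unfolding col_mult2[OF Cc Dc j] .
    hence "col (C * D) j $ i = 0" using i by simp
    thus "(C * D) $$ (i,j) = 0\<^sub>m n n $$ (i,j)" using i j Cc Dc by simp
  qed (use Cc Dc in auto)
  have "D * D = B * D - C * D" unfolding D_def
    by (rule minus_mult_distrib_mat) (use Bc Cc in \<open>auto simp: minus_carrier_mat\<close>)
  hence DD: "D * D = 0\<^sub>m n n" using BD CD by simp
  have "D = 0\<^sub>m n n"
  proof (rule eq_matI)
    fix i j assume "i < dim_row (0\<^sub>m n n :: complex mat)" "j < dim_col (0\<^sub>m n n :: complex mat)"
    hence i: "i < n" and j: "j < n" by auto
    have "(D * D) $$ (j,j) = 0" using DD j by simp
    hence "row D j \<bullet> col D j = 0" using Dc j by simp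
    have cj: "col D j \<in> carrier_vec n" using Dc j by (rule_tac col_carrier_vec) auto
    have "col D j \<bullet>c col D j = col D j \<bullet> row D j" using herm_row_col[OF Dc DH j] by simp
    also have "\<dots> = row D j \<bullet> col D j"
      by (rule comm_scalar_prod[OF cj]) (use Dc j in \<open>rule_tac row_carrier_vec, auto\<close>)
    finally have "col D j \<bullet>c col D j = 0" using \<open>row D j \<bullet> col D j = 0\<close> by simp
    hence "col D j = 0\<^sub>v n" using conjugate_square_eq_0_vec[OF cj] by blast
    hence "col D j $ i = 0" using i by simp
    thus "D $$ (i,j) = 0\<^sub>m n n $$ (i,j)" using i j Dc by simp
  qed (use Dc in auto)
  hence D0: "D $$ (i,j) = 0" if "i < n" "j < n" for i j using that by simp
  show ?thesis
  proof (rule eq_matI)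
    fix i j assume "i < dim_row C" "j < dim_col C"
    hence i: "i < n" and j: "j < n" using Cc by auto
    show "B $$ (i,j) = C $$ (i,j)" using D0[OF i j] i j Bc Cc unfolding D_def by simp
  qed (use Bc Cc in auto)
qed

lemma assoc_dim: assumes "dim_col A = dim_row B" "dim_col B = dim_row C" shows "A * B * C = A * (B * C)"
proof -
  have a: "A \<in> carrier_mat (dim_row A) (dim_row B)" using assms unfolding carrier_mat_def by simp
  have b: "B \<in> carrier_mat (dim_row B) (dim_row C)" using assms unfolding carrier_mat_def by simp
  have c: "C \<in> carrier_mat (dim_row C) (dim_col C)" unfolding carrier_mat_def by simp
  show ?thesis by (rule assoc_mult_mat[OF a b c])
qed
lemma assoc_mv_dim: assumes "dim_col A = dim_row B" "dim_col B = dim_vec v" shows "(A * B) *\<^sub>v v = A *\<^sub>v (B *\<^sub>v v)"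
proof -
  have a: "A \<in> carrier_mat (dim_row A) (dim_row B)" using assms unfolding carrier_mat_def by simp
  have b: "B \<in> carrier_mat (dim_row B) (dim_vec v)" using assms unfolding carrier_mat_def by simp
  have c: "v \<in> carrier_vec (dim_vec v)" unfolding carrier_vec_def by simp
  show ?thesis by (rule assoc_mult_mat_vec[OF a b c])
qed

lemma adjoint_mult_dim: assumes "dim_col A = dim_row (B::complex mat)" shows "adjoint_mat (A * B) = adjoint_mat B * adjoint_mat A"
proof -
  have a: "A \<in> carrier_mat (dim_row A) (dim_row B)" using assms unfolding carrier_mat_def by simp
  have b: "B \<in> carrier_mat (dim_row B) (dim_col B)" unfolding carrier_mat_def by simp
  show ?thesis by (rule adjoint_mult[OF a b])
qed

lemma msqrt_eq: assumes "psd n B" "B * B = A" "dim_row A = n"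
  shows "msqrt A = B"
  unfolding msqrt_def assms(3)
proof (rule the_equality)
  show "psd n B \<and> B * B = A" using assms by simp
next
  fix C assume "psd n C \<and> C * C = A"
  thus "C = B" using psd_sqrt_unique[of n C B] assms by simp
qed

definition dmat :: "nat \<Rightarrow> (nat \<Rightarrow> real) \<Rightarrow> complex mat" where
  "dmat n f = mat n n (\<lambda>(i,j). if i = j then complex_of_real (f i) else 0)"

lemma dmat_carrier[simp]: "dmat n f \<in> carrier_mat n n" by (simp add: dmat_def)
lemma dmat_dims[simp]: "dim_row (dmat n f) = n" "dim_col (dmat n f) = n" by (auto simp: dmat_def)
lemma dmat_index[simp]: "i < n \<Longrightarrow> j < n \<Longrightarrow> dmat n f $$ (i,j) = (if i = j then complex_of_real (f i) else 0)"
  by (simp add: dmat_def)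

lemma dmat_adjoint[simp]: "adjoint_mat (dmat n f) = dmat n f"
  by (rule eq_matI) auto

lemma dmat_mult_vec: assumes "v \<in> carrier_vec n" "i < n"
  shows "(dmat n f *\<^sub>v v) $ i = complex_of_real (f i) * v $ i"
proof -
  have "(dmat n f *\<^sub>v v) $ i = (\<Sum>k\<in>{0..<n}. (if i = k then complex_of_real (f i) else 0) * v $ k)"
    using assms by (simp add: scalar_prod_def)
  also have "\<dots> = (\<Sum>k\<in>{0..<n}. if k = i then complex_of_real (f i) * v $ k else 0)"
    by (intro sum.cong) auto
  also have "\<dots> = complex_of_real (f i) * v $ i" using assms by simp
  finally show ?thesis .
qed

lemma dmat_mult: "dmat n f * dmat n g = dmat n (\<lambda>i. f i * g i)"
proof (rule eq_matI)
  fix i j assume "i < dim_row (dmat n (\<lambda>i. f i * g i))" "j < dim_col (dmat n (\<lambda>i. f i * g i))"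
  hence i: "i < n" and j: "j < n" by auto
  have "(dmat n f * dmat n g) $$ (i,j) = (\<Sum>k\<in>{0..<n}. (if i = k then complex_of_real (f i) else 0) * (if k = j then complex_of_real (g k) else 0))"
    using i j by (simp add: scalar_prod_def)
  also have "\<dots> = (\<Sum>k\<in>{0..<n}. if k = i then (if i = j then complex_of_real (f i * g i) else 0) else 0)"
    by (intro sum.cong) auto
  also have "\<dots> = dmat n (\<lambda>i. f i * g i) $$ (i,j)" using i j by simp
  finally show "(dmat n f * dmat n g) $$ (i,j) = dmat n (\<lambda>i. f i * g i) $$ (i,j)" .
qed auto

lemma udiag_carrier[simp]: "V \<in> carrier_mat n n \<Longrightarrow> V * dmat n f * adjoint_mat V \<in> carrier_mat n n"
  by (metis mult_carrier_mat adjoint_carrier dmat_carrier)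

lemma udiag_dim: "V \<in> carrier_mat n n \<Longrightarrow> dim_row (V * dmat n f * adjoint_mat V) = n"
  using udiag_carrier by (metis carrier_matD(1))

lemma udiag_psd: assumes V: "V \<in> carrier_mat n n" and f: "\<And>i. i < n \<Longrightarrow> 0 \<le> f i"
  shows "psd n (V * dmat n f * adjoint_mat V)"
proof -
  have c: "V * dmat n f * adjoint_mat V \<in> carrier_mat n n" using V by (rule udiag_carrier)
  have h: "adjoint_mat (V * dmat n f * adjoint_mat V) = V * dmat n f * adjoint_mat V"
    using V by (simp add: adjoint_mult_dim assoc_dim)
  have q: "0 \<le> conjugate v \<bullet> ((V * dmat n f * adjoint_mat V) *\<^sub>v v)" if v: "v \<in> carrier_vec n" for v
  proof -
    define w where "w = adjoint_mat V *\<^sub>v v"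
    have w: "w \<in> carrier_vec n" unfolding w_def by (metis mult_mat_vec_carrier adjoint_carrier V v)
    have "conjugate v \<bullet> ((V * dmat n f * adjoint_mat V) *\<^sub>v v) = conjugate v \<bullet> (V *\<^sub>v (dmat n f *\<^sub>v w))"
      using V v by (simp add: w_def assoc_mv_dim carrier_matD carrier_vecD)
    also have "\<dots> = conjugate w \<bullet> (dmat n f *\<^sub>v w)"
      using quad_move[OF V v mult_mat_vec_carrier[OF dmat_carrier w]] by (simp add: w_def)
    also have "\<dots> = (\<Sum>i\<in>{0..<n}. cnj (w $ i) * (complex_of_real (f i) * w $ i))"
      unfolding scalar_prod_def using w by (intro sum.cong) (auto simp: dmat_mult_vec simp del: index_mult_mat_vec)
    also have "\<dots> = (\<Sum>i\<in>{0..<n}. complex_of_real (f i) * (w $ i * cnj (w $ i)))"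
      by (simp add: ac_simps)
    also have "0 \<le> \<dots>"
    proof (rule sum_nonneg)
      fix i assume "i \<in> {0..<n}"
      hence "0 \<le> f i" using f by simp
      hence fi: "0 \<le> complex_of_real (f i)" by (simp add: less_eq_complex_def)
      have sq: "0 \<le> w $ i * cnj (w $ i)" using conjugate_square_positive[of "w $ i"] by simp
      show "0 \<le> complex_of_real (f i) * (w $ i * cnj (w $ i))"
        by (rule mult_nonneg_nonneg[OF fi sq])
    qed
    finally show ?thesis .
  qed
  show ?thesis unfolding psd_def using c h q by (auto simp: less_eq_complex_def)
qed

lemma udiag_mult: assumes V: "V \<in> carrier_mat n n" and U: "adjoint_mat V * V = 1\<^sub>m n"
  shows "(V * dmat n f * adjoint_mat V) * (V * dmat n g * adjoint_mat V) = V * dmat n (\<lambda>i. f i * g i) * adjoint_mat V"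
proof -
  note W = adjoint_carrier[OF V]
  have "(V * dmat n f * adjoint_mat V) * (V * dmat n g * adjoint_mat V) =
        V * (dmat n f * ((adjoint_mat V * V) * (dmat n g * adjoint_mat V)))"
    using V W by (simp add: assoc_dim)
  also have "\<dots> = V * (dmat n f * dmat n g) * adjoint_mat V" using V W U by (simp add: assoc_dim)
  finally show ?thesis by (simp add: dmat_mult)
qed

lemma msqrt_udiag: assumes V: "V \<in> carrier_mat n n" and U: "adjoint_mat V * V = 1\<^sub>m n"
  and f: "\<And>i. i < n \<Longrightarrow> 0 \<le> f i"
  shows "msqrt (V * dmat n (\<lambda>i. f i * f i) * adjoint_mat V) = V * dmat n f * adjoint_mat V"
  by (rule msqrt_eq[OF udiag_psd[OF V f] udiag_mult[OF V U]]) (use V udiag_dim[OF V] in auto)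

lemma char_poly_udiag: assumes V: "V \<in> carrier_mat n n" and U: "adjoint_mat V * V = 1\<^sub>m n"
  shows "char_poly (V * dmat n f * adjoint_mat V) = prod_list (map (\<lambda>i. [:- complex_of_real (f i), 1:]) [0..<n])"
proof -
  have U2: "V * adjoint_mat V = 1\<^sub>m n" using mat_mult_left_right_inverse[OF adjoint_carrier[OF V] V U] .
  have "similar_mat (V * dmat n f * adjoint_mat V) (dmat n f)"
    unfolding similar_mat_def similar_mat_wit_def using V U U2 by (intro exI[of _ V] exI[of _ "adjoint_mat V"]) (auto simp: Let_def)
  hence "char_poly (V * dmat n f * adjoint_mat V) = char_poly (dmat n f)" by (rule char_poly_similar)
  also have "\<dots> = prod_list (map (\<lambda>a. [:- a, 1:]) (diag_mat (dmat n f)))"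
    by (rule char_poly_upper_triangular[of _ n]) (auto simp: upper_triangular_def)
  also have "diag_mat (dmat n f) = map (\<lambda>i. complex_of_real (f i)) [0..<n]"
    by (simp add: diag_mat_def)
  finally show ?thesis by (simp add: comp_def)
qed

lemma prod_lin_unique:
  "sorted_wrt (\<ge>) xs \<Longrightarrow> sorted_wrt (\<ge>) ys \<Longrightarrow> length xs = length ys \<Longrightarrow>
   prod_list (map (\<lambda>x. [:- complex_of_real x, 1:]) xs) = prod_list (map (\<lambda>x. [:- complex_of_real x, 1:]) ys) \<Longrightarrow> xs = ys"
proof (induction xs arbitrary: ys)
  case Nil thus ?case by simp
next
  case (Cons x xs ys)
  obtain y ys' where ys: "ys = y # ys'" using Cons.prems(3) by (cases ys) auto
  let ?P = "\<lambda>l. prod_list (map (\<lambda>x. [:- complex_of_real x, 1:]) l)"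
  have pe: "poly (?P l) z = prod_list (map (\<lambda>x. z - complex_of_real x) l)" for l z
    by (induction l) (auto simp: algebra_simps)
  have root: "z \<in> set l" if "poly (?P l) (complex_of_real z) = 0" for z l
    using that unfolding pe prod_list_zero_iff by auto
  have r1: "poly (?P (x # xs)) (complex_of_real y) = 0" unfolding Cons.prems(4) ys pe by simp
  have r2: "poly (?P ys) (complex_of_real x) = 0" unfolding Cons.prems(4)[symmetric] pe by simp
  have "y \<in> set (x # xs)" using root[OF r1] .
  hence "y \<le> x" using Cons.prems(1) by auto
  moreover have "x \<in> set ys" using root[OF r2] .
  hence "x \<le> y" using Cons.prems(2) ys by auto
  ultimately have xy: "x = y" by simp
  have e: "?P (x # xs) = ?P (x # ys')" using Cons.prems(4) ys xy by (simp only:)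
  hence "[:- complex_of_real x, 1:] * ?P xs = [:- complex_of_real x, 1:] * ?P ys'" by (simp only: list.map prod_list.Cons)
  moreover have "[:- complex_of_real x, 1:] \<noteq> 0" by simp
  ultimately have "?P xs = ?P ys'" using mult_left_cancel by blast
  hence "xs = ys'" using Cons.IH[of ys'] Cons.prems ys by simp
  thus ?case using xy ys by simp
qed

lemma less4: "(i::nat) < 4 \<longleftrightarrow> i = 0 \<or> i = 1 \<or> i = 2 \<or> i = 3" by auto
lemma less2: "(i::nat) < 2 \<longleftrightarrow> i = 0 \<or> i = 1" by auto

definition m4 :: "complex \<Rightarrow> complex \<Rightarrow> complex \<Rightarrow> complex \<Rightarrow> complex \<Rightarrow> complex \<Rightarrow> complex \<Rightarrow> complex \<Rightarrow> complex \<Rightarrow> complex \<Rightarrow> complex \<Rightarrow> complex \<Rightarrow> complex \<Rightarrow> complex \<Rightarrow> complex \<Rightarrow> complex \<Rightarrow> complex mat" where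
  "m4 a00 a01 a02 a03 a10 a11 a12 a13 a20 a21 a22 a23 a30 a31 a32 a33 = mat 4 4 (\<lambda>(i,j). if i = 0 then (if j = 0 then a00 else if j = 1 then a01 else if j = 2 then a02 else a03) else if i = 1 then (if j = 0 then a10 else if j = 1 then a11 else if j = 2 then a12 else a13) else if i = 2 then (if j = 0 then a20 else if j = 1 then a21 else if j = 2 then a22 else a23) else (if j = 0 then a30 else if j = 1 then a31 else if j = 2 then a32 else a33))"

lemma m4_carrier[simp]: "m4 a00 a01 a02 a03 a10 a11 a12 a13 a20 a21 a22 a23 a30 a31 a32 a33 \<in> carrier_mat 4 4" by (simp add: m4_def)
lemma m4_dims[simp]: "dim_row (m4 a00 a01 a02 a03 a10 a11 a12 a13 a20 a21 a22 a23 a30 a31 a32 a33) = 4" "dim_col (m4 a00 a01 a02 a03 a10 a11 a12 a13 a20 a21 a22 a23 a30 a31 a32 a33) = 4" by (simp_all add: m4_def)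

lemma m4_index[simp]:
  "m4 a00 a01 a02 a03 a10 a11 a12 a13 a20 a21 a22 a23 a30 a31 a32 a33 $$ (0,0) = a00"
  "m4 a00 a01 a02 a03 a10 a11 a12 a13 a20 a21 a22 a23 a30 a31 a32 a33 $$ (0,1) = a01"
  "m4 a00 a01 a02 a03 a10 a11 a12 a13 a20 a21 a22 a23 a30 a31 a32 a33 $$ (0,2) = a02"
  "m4 a00 a01 a02 a03 a10 a11 a12 a13 a20 a21 a22 a23 a30 a31 a32 a33 $$ (0,3) = a03"
  "m4 a00 a01 a02 a03 a10 a11 a12 a13 a20 a21 a22 a23 a30 a31 a32 a33 $$ (1,0) = a10"
  "m4 a00 a01 a02 a03 a10 a11 a12 a13 a20 a21 a22 a23 a30 a31 a32 a33 $$ (1,1) = a11"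
  "m4 a00 a01 a02 a03 a10 a11 a12 a13 a20 a21 a22 a23 a30 a31 a32 a33 $$ (1,2) = a12"
  "m4 a00 a01 a02 a03 a10 a11 a12 a13 a20 a21 a22 a23 a30 a31 a32 a33 $$ (1,3) = a13"
  "m4 a00 a01 a02 a03 a10 a11 a12 a13 a20 a21 a22 a23 a30 a31 a32 a33 $$ (2,0) = a20"
  "m4 a00 a01 a02 a03 a10 a11 a12 a13 a20 a21 a22 a23 a30 a31 a32 a33 $$ (2,1) = a21"
  "m4 a00 a01 a02 a03 a10 a11 a12 a13 a20 a21 a22 a23 a30 a31 a32 a33 $$ (2,2) = a22"
  "m4 a00 a01 a02 a03 a10 a11 a12 a13 a20 a21 a22 a23 a30 a31 a32 a33 $$ (2,3) = a23"
  "m4 a00 a01 a02 a03 a10 a11 a12 a13 a20 a21 a22 a23 a30 a31 a32 a33 $$ (3,0) = a30"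
  "m4 a00 a01 a02 a03 a10 a11 a12 a13 a20 a21 a22 a23 a30 a31 a32 a33 $$ (3,1) = a31"
  "m4 a00 a01 a02 a03 a10 a11 a12 a13 a20 a21 a22 a23 a30 a31 a32 a33 $$ (3,2) = a32"
  "m4 a00 a01 a02 a03 a10 a11 a12 a13 a20 a21 a22 a23 a30 a31 a32 a33 $$ (3,3) = a33"
  by (simp_all add: m4_def)

lemma m4_index'[simp]:
  "m4 a00 a01 a02 a03 a10 a11 a12 a13 a20 a21 a22 a23 a30 a31 a32 a33 $$ (0,Suc 0) = a01"
  "m4 a00 a01 a02 a03 a10 a11 a12 a13 a20 a21 a22 a23 a30 a31 a32 a33 $$ (Suc 0,0) = a10"
  "m4 a00 a01 a02 a03 a10 a11 a12 a13 a20 a21 a22 a23 a30 a31 a32 a33 $$ (Suc 0,Suc 0) = a11"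
  "m4 a00 a01 a02 a03 a10 a11 a12 a13 a20 a21 a22 a23 a30 a31 a32 a33 $$ (Suc 0,2) = a12"
  "m4 a00 a01 a02 a03 a10 a11 a12 a13 a20 a21 a22 a23 a30 a31 a32 a33 $$ (Suc 0,3) = a13"
  "m4 a00 a01 a02 a03 a10 a11 a12 a13 a20 a21 a22 a23 a30 a31 a32 a33 $$ (2,Suc 0) = a21"
  "m4 a00 a01 a02 a03 a10 a11 a12 a13 a20 a21 a22 a23 a30 a31 a32 a33 $$ (3,Suc 0) = a31"
  by (simp_all add: m4_def)

lemma eq4I: "dim_row A = 4 \<Longrightarrow> dim_col A = 4 \<Longrightarrow> dim_row B = 4 \<Longrightarrow> dim_col B = 4 \<Longrightarrow> A $$ (0,0) = B $$ (0,0) \<Longrightarrow> A $$ (0,1) = B $$ (0,1) \<Longrightarrow> A $$ (0,2) = B $$ (0,2) \<Longrightarrow> A $$ (0,3) = B $$ (0,3) \<Longrightarrow> A $$ (1,0) = B $$ (1,0) \<Longrightarrow> A $$ (1,1) = B $$ (1,1) \<Longrightarrow> A $$ (1,2) = B $$ (1,2) \<Longrightarrow> A $$ (1,3) = B $$ (1,3) \<Longrightarrow> A $$ (2,0) = B $$ (2,0) \<Longrightarrow> A $$ (2,1) = B $$ (2,1) \<Longrightarrow> A $$ (2,2) = B $$ (2,2) \<Longrightarrow> A $$ (2,3) = B $$ (2,3) \<Longrightarrow> A $$ (3,0) = B $$ (3,0) \<Longrightarrow> A $$ (3,1) = B $$ (3,1) \<Longrightarrow> A $$ (3,2) = B $$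 (3,2) \<Longrightarrow> A $$ (3,3) = B $$ (3,3) \<Longrightarrow> A = B"
  by (rule eq_matI) (auto simp: less4)

lemma mult4_index: "dim_col A = 4 \<Longrightarrow> dim_row B = 4 \<Longrightarrow> i < dim_row A \<Longrightarrow> j < dim_col B \<Longrightarrow>
  (A * B) $$ (i,j) = A $$ (i,0) * B $$ (0,j) + A $$ (i,1) * B $$ (1,j) + A $$ (i,2) * B $$ (2,j) + A $$ (i,3) * B $$ (3,j)"
  by (simp add: scalar_prod_def eval_nat_numeral)

definition Smat :: "complex mat" where
  "Smat = m4 0 0 0 (-1) 0 0 1 0 0 1 0 0 (-1) 0 0 0"

lemma Smat_carrier[simp]: "Smat \<in> carrier_mat 4 4" by (simp add: Smat_def)
lemma Smat_dims[simp]: "dim_row Smat = 4" "dim_col Smat = 4" by (simp_all add: Smat_def)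

lemma sigma_y_index[simp]: "sigma_y $$ (0,0) = 0" "sigma_y $$ (0,1) = - \<i>" "sigma_y $$ (1,0) = \<i>" "sigma_y $$ (1,1) = 0"
  by (simp_all add: sigma_y_def mat_of_rows_list_def)
lemma sigma_y_index'[simp]: "sigma_y $$ (0,Suc 0) = - \<i>" "sigma_y $$ (Suc 0,0) = \<i>" "sigma_y $$ (Suc 0,Suc 0) = 0"
  by (simp_all add: sigma_y_def mat_of_rows_list_def)

lemma kron_S: "kron2 sigma_y sigma_y = Smat"
  by (rule eq4I) (simp_all add: kron2_def Smat_def)

lemma conj_mat_dims[simp]: "dim_row (conj_mat A) = dim_row A" "dim_col (conj_mat A) = dim_col A"
  by (auto simp: conj_mat_def)
lemma conj_mat_index[simp]: "i < dim_row A \<Longrightarrow> j < dim_col A \<Longrightarrow> conj_mat A $$ (i,j) = cnj (A $$ (i,j))"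
  by (auto simp: conj_mat_def)
lemma conj_mat_carrier[simp]: "A \<in> carrier_mat n m \<Longrightarrow> conj_mat A \<in> carrier_mat n m"
  by (auto simp: conj_mat_def)

lemma conj_mat_mult_dim: "dim_col A = dim_row B \<Longrightarrow> conj_mat (A * B) = conj_mat A * conj_mat B"
  by (rule eq_matI) (auto simp: scalar_prod_def)

lemma conj_conj[simp]: "conj_mat (conj_mat A) = A" by (rule eq_matI) auto
lemma conj_adjoint[simp]: "conj_mat (adjoint_mat A) = transpose_mat A" by (rule eq_matI) auto
lemma conj_transpose[simp]: "conj_mat (transpose_mat A) = adjoint_mat A" by (rule eq_matI) auto
lemma conj_dmat[simp]: "conj_mat (dmat n f) = dmat n f" by (rule eq_matI) auto
lemma conj_S[simp]: "conj_mat Smat = Smat"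
  by (rule eq4I) (simp_all add: Smat_def)
lemma conj_one[simp]: "conj_mat (1\<^sub>m n) = 1\<^sub>m n" by (rule eq_matI) auto
lemma adjoint_transpose: "adjoint_mat A = transpose_mat (conj_mat A)" by (rule eq_matI) auto

lemma transpose_dims': "dim_row (transpose_mat A) = dim_col A" "dim_col (transpose_mat A) = dim_row A" by auto

theorem reduction:
  fixes U W :: "complex mat" and g lam :: "nat \<Rightarrow> real"
  assumes U: "U \<in> carrier_mat 4 4" and UU: "adjoint_mat U * U = 1\<^sub>m 4"
    and W: "W \<in> carrier_mat 4 4" and WW: "adjoint_mat W * W = 1\<^sub>m 4"
    and g: "\<And>i. 0 \<le> g i"
    and rho: "\<rho> = U * dmat 4 g * adjoint_mat U"
    and K: "dmat 4 (\<lambda>i. sqrt (g i)) * adjoint_mat U * Smat * conj_mat U * dmat 4 (\<lambda>i. sqrt (g i))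
            = W * dmat 4 lam * transpose_mat W"
  shows "char_poly (msqrt (msqrt \<rho> * spin_flip \<rho> * msqrt \<rho>)) =
         prod_list (map (\<lambda>i. [:- complex_of_real \<bar>lam i\<bar>, 1:]) [0..<4])"
proof -
  define Ds where "Ds = dmat 4 (\<lambda>i. sqrt (g i))"
  define D where "D = dmat 4 g"
  define L where "L = dmat 4 lam"
  have Uc: "dim_row U = 4" "dim_col U = 4" using U by auto
  have Wc: "dim_row W = 4" "dim_col W = 4" using W by auto
  have DD: "Ds * Ds = D" unfolding Ds_def D_def dmat_mult using g by (simp add: real_sqrt_mult_self)
  have gg: "(\<lambda>i. sqrt (g i) * sqrt (g i)) = g" using g by (simp add: real_sqrt_mult_self)
  have sq: "msqrt \<rho> = U * Ds * adjoint_mat U"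
    using msqrt_udiag[OF U UU, of "\<lambda>i. sqrt (g i)"] unfolding gg rho Ds_def by (simp add: g)
  have cr: "conj_mat \<rho> = conj_mat U * D * transpose_mat U"
    unfolding rho D_def using Uc by (simp add: conj_mat_mult_dim)
  define K0 where "K0 = Ds * adjoint_mat U * Smat * conj_mat U * Ds"
  have cK0: "conj_mat K0 = Ds * transpose_mat U * Smat * U * Ds"
    unfolding K0_def Ds_def using Uc by (simp add: conj_mat_mult_dim)
  have M1: "msqrt \<rho> * spin_flip \<rho> * msqrt \<rho> = U * (K0 * (conj_mat K0 * adjoint_mat U))"
    unfolding sq spin_flip_def kron_S cr cK0 unfolding K0_def DD[symmetric]
    using Uc by (simp add: assoc_dim Ds_def)
  have KW: "K0 = W * L * transpose_mat W" unfolding K0_def Ds_def L_def using K by simp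
  have cKW: "conj_mat K0 = conj_mat W * L * adjoint_mat W" unfolding KW L_def using Wc
    by (simp add: conj_mat_mult_dim)
  have TW: "transpose_mat W * conj_mat W = 1\<^sub>m 4"
  proof -
    have "transpose_mat W * conj_mat W = conj_mat (adjoint_mat W * W)"
      using Wc by (simp add: conj_mat_mult_dim)
    thus ?thesis using WW by simp
  qed
  have "U * (K0 * (conj_mat K0 * adjoint_mat U)) =
        (U * W) * L * (transpose_mat W * conj_mat W) * L * (adjoint_mat W * adjoint_mat U)"
    unfolding cKW unfolding KW L_def using Uc Wc by (simp add: assoc_dim)
  also have "\<dots> = (U * W) * (L * L) * (adjoint_mat W * adjoint_mat U)"
    unfolding TW L_def using Uc Wc by (simp add: assoc_dim)
  also have "L * L = dmat 4 (\<lambda>i. \<bar>lam i\<bar> * \<bar>lam i\<bar>)" unfolding L_def dmat_mult by simp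
  also have "adjoint_mat W * adjoint_mat U = adjoint_mat (U * W)" using Uc Wc by (simp add: adjoint_mult_dim)
  finally have M2: "msqrt \<rho> * spin_flip \<rho> * msqrt \<rho> = (U * W) * dmat 4 (\<lambda>i. \<bar>lam i\<bar> * \<bar>lam i\<bar>) * adjoint_mat (U * W)"
    using M1 by simp
  have V: "U * W \<in> carrier_mat 4 4" using U W by simp
  have VV: "adjoint_mat (U * W) * (U * W) = 1\<^sub>m 4"
  proof -
    have "adjoint_mat (U * W) * (U * W) = adjoint_mat W * ((adjoint_mat U * U) * W)"
      using Uc Wc by (simp add: adjoint_mult_dim assoc_dim)
    also have "\<dots> = 1\<^sub>m 4" using UU WW W by simp
    finally show ?thesis .
  qed
  have "msqrt (msqrt \<rho> * spin_flip \<rho> * msqrt \<rho>) = (U * W) * dmat 4 (\<lambda>i. \<bar>lam i\<bar>) * adjoint_mat (U * W)"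
    unfolding M2 by (rule msqrt_udiag[OF V VV]) simp
  thus ?thesis using char_poly_udiag[OF V VV] by simp
qed

lemma conc_from:
  assumes cp: "char_poly (msqrt (msqrt \<rho> * spin_flip \<rho> * msqrt \<rho>)) =
         prod_list (map (\<lambda>i. [:- complex_of_real \<bar>lam i\<bar>, 1:]) [0..<4])"
    and l2: "lam 2 = 0" and l3: "lam 3 = 0"
  shows "concurrence \<rho> = \<bar>\<bar>lam 0\<bar> - \<bar>lam 1\<bar>\<bar>"
proof -
  define a where "a = \<bar>lam 0\<bar>"
  define b where "b = \<bar>lam 1\<bar>"
  define l where "l = [max a b, min a b, 0, 0]"
  let ?R = "msqrt (msqrt \<rho> * spin_flip \<rho> * msqrt \<rho>)"
  let ?P = "\<lambda>l. prod_list (map (\<lambda>x. [:- complex_of_real x, 1:]) l)"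
  have ab: "0 \<le> a" "0 \<le> b" by (auto simp: a_def b_def)
  have sl: "sorted_wrt (\<ge>) l" using ab by (auto simp: l_def)
  have m: "map (\<lambda>i. [:- complex_of_real \<bar>lam i\<bar>, 1:]) [0..<4] = map (\<lambda>x. [:- complex_of_real x, 1:]) [a, b, 0, 0]"
    using l2 l3 by (simp add: upt_rec a_def b_def numeral_2_eq_2 numeral_3_eq_3)
  have "char_poly ?R = ?P [a, b, 0, 0]" using cp unfolding m .
  also have "?P [a, b, 0, 0] = ?P l"
  proof (cases "a \<le> b")
    case True
    hence "l = [b, a, 0, 0]" by (simp add: l_def)
    thus ?thesis by (simp only: list.map prod_list.Cons mult.left_commute)
  next
    case False
    hence "l = [a, b, 0, 0]" by (simp add: l_def)
    thus ?thesis by (simp only:)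
  qed
  finally have cpl: "char_poly ?R = ?P l" .
  have "conc_eigs \<rho> = l"
    unfolding conc_eigs_def Let_def
  proof (rule the_equality)
    show "length l = 4 \<and> sorted_wrt (\<ge>) l \<and> char_poly ?R = ?P l"
      by (intro conjI) (simp add: l_def, rule sl, rule cpl)
  next
    fix l' assume h: "length l' = 4 \<and> sorted_wrt (\<ge>) l' \<and> char_poly ?R = ?P l'"
    have e: "?P l' = ?P l" using h cpl by metis
    show "l' = l" by (rule prod_lin_unique[OF conjunct1[OF conjunct2[OF h]] sl _ e]) (use h in \<open>simp add: l_def\<close>)
  qed
  thus ?thesis unfolding concurrence_def Let_def using ab by (simp add: l_def a_def b_def max_def min_def abs_if)
qed

lemma diag2:
  fixes a b d :: real
  shows "\<exists>x y l1 l2. x * x + y * y = 1 \<and> a = x * x * l1 + y * y * l2 \<and> b = x * y * (l1 - l2) \<and> d = y * y * l1 + x * x * l2"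
proof -
  define r where "r = sqrt ((a - d)^2 + (2 * b)^2)"
  show ?thesis
  proof (cases "r = 0")
    case True
    hence "(a - d)^2 + (2 * b)^2 = 0" unfolding r_def by simp
    hence "a = d" "b = 0" by (auto simp: add_nonneg_eq_0_iff)
    thus ?thesis by (intro exI[of _ 1] exI[of _ 0] exI[of _ a]) auto
  next
    case False
    have r0: "r > 0" using False unfolding r_def by (simp add: order_neq_le_trans)
    have rr: "r * r = (a - d)^2 + (2 * b)^2" unfolding r_def by (simp add: real_sqrt_mult_self)
    have "((a - d) / r)^2 + (2 * b / r)^2 = 1"
      using r0 rr by (simp add: power_divide field_simps power2_eq_square)
    then obtain t where t: "(a - d) / r = cos t" "2 * b / r = sin t"
      using sincos_total_2pi by metis
    define x where "x = cos (t / 2)"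
    define y where "y = sin (t / 2)"
    have xy1: "x * x + y * y = 1" unfolding x_def y_def by (simp add: sin_squared_eq[symmetric] power2_eq_square)
    have c2: "x * x - y * y = (a - d) / r"
      unfolding t x_def y_def using cos_double[of "t/2"] by (simp add: power2_eq_square)
    have s2: "2 * x * y = 2 * b / r"
      unfolding t x_def y_def using sin_double[of "t/2"] by (simp add: mult.assoc)
    define l1 where "l1 = (a + d + r) / 2"
    define l2 where "l2 = (a + d - r) / 2"
    have e1: "a = x * x * l1 + y * y * l2"
    proof -
      have "x * x * l1 + y * y * l2 = (x * x + y * y) * (a + d) / 2 + (x * x - y * y) * r / 2"
        by (simp add: l1_def l2_def field_simps)
      thus ?thesis using xy1 c2 r0 by (simp add: field_simps)
    qed
    have e2: "b = x * y * (l1 - l2)"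
    proof -
      have "x * y * (l1 - l2) = (2 * x * y) * r / 2" by (simp add: l1_def l2_def field_simps)
      thus ?thesis using s2 r0 by simp
    qed
    have e3: "d = y * y * l1 + x * x * l2"
    proof -
      have "y * y * l1 + x * x * l2 = (x * x + y * y) * (a + d) / 2 - (x * x - y * y) * r / 2"
        by (simp add: l1_def l2_def field_simps)
      thus ?thesis using xy1 c2 r0 by (simp add: field_simps)
    qed
    show ?thesis using xy1 e1 e2 e3 by blast
  qed
qed

definition Ug :: "complex \<Rightarrow> complex \<Rightarrow> complex \<Rightarrow> complex \<Rightarrow> complex \<Rightarrow> complex \<Rightarrow> complex \<Rightarrow> complex mat" where
  "Ug c s ca sa cp sp E = m4 c (E*sp*s) (E*cp*s) 0  0 (cp*ca) (-(sp*ca)) (-sa)  0 (cp*sa) (-(sp*sa)) ca  s (-(E*sp*c)) (-(E*cp*c)) 0"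

lemma Ug_carrier[simp]: "Ug c s ca sa cp sp E \<in> carrier_mat 4 4" by (simp add: Ug_def)
lemma Ug_dims[simp]: "dim_row (Ug c s ca sa cp sp E) = 4" "dim_col (Ug c s ca sa cp sp E) = 4" by (simp_all add: Ug_def)

lemma Ug_unitary:
  assumes r: "cnj c = c" "cnj s = s" "cnj ca = ca" "cnj sa = sa" "cnj cp = cp" "cnj sp = sp"
    and h: "c*c + s*s = 1" "ca*ca + sa*sa = 1" "cp*cp + sp*sp = 1" "cnj E * E = 1"
  shows "adjoint_mat (Ug c s ca sa cp sp E) * Ug c s ca sa cp sp E = 1\<^sub>m 4"
  apply (rule eq4I)
  apply (simp_all add: mult4_index Ug_def r del: index_mult_mat(1))
  apply (insert h)
  apply ((simp add: add.commute; fail) | Groebner_Basis.algebra)+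
  done


lemma K0_gen:
  assumes r: "cnj c = c" "cnj s = s" "cnj ca = ca" "cnj sa = sa" "cnj cp = cp" "cnj sp = sp"
    and h2: "h 2 = 0" and h3: "h 3 = 0"
  shows "dmat 4 h * adjoint_mat (Ug c s ca sa cp sp E) * Smat * conj_mat (Ug c s ca sa cp sp E) * dmat 4 h =
    m4 (of_real (h 0) * of_real (h 0) * (-(2*c*s))) (of_real (h 0) * of_real (h 1) * (cnj E * sp * (c*c - s*s))) 0 0
       (of_real (h 0) * of_real (h 1) * (cnj E * sp * (c*c - s*s))) (of_real (h 1) * of_real (h 1) * (2 * cnj E * cnj E * sp * sp * s * c + 2 * cp * cp * ca * sa)) 0 0
       0 0 0 0  0 0 0 0"
  apply (rule eq4I)
  apply (simp_all add: mult4_index Ug_def Smat_def r h2 h3 del: index_mult_mat(1))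
  apply (simp_all add: algebra_simps)
  done

lemma rho_gen:
  assumes v1: "dim_vec v1 = 4" and v2: "dim_vec v2 = 4"
    and u: "\<And>i. i < 4 \<Longrightarrow> U $$ (i,0) = v1 $ i" "\<And>i. i < 4 \<Longrightarrow> U $$ (i,1) = v2 $ i"
    and U: "U \<in> carrier_mat 4 4"
  shows "complex_of_real n1 \<cdot>\<^sub>m proj v1 + complex_of_real n2 \<cdot>\<^sub>m proj v2 =
    U * dmat 4 (\<lambda>i. if i = 0 then n1 else if i = 1 then n2 else 0) * adjoint_mat U"
proof -
  have U': "dim_row U = 4" "dim_col U = 4" using U by auto
  have u': "U $$ (0,0) = v1 $ 0" "U $$ (1,0) = v1 $ 1" "U $$ (2,0) = v1 $ 2" "U $$ (3,0) = v1 $ 3"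
     "U $$ (0,1) = v2 $ 0" "U $$ (1,1) = v2 $ 1" "U $$ (2,1) = v2 $ 2" "U $$ (3,1) = v2 $ 3"
    using u by auto
  show ?thesis
    apply (rule eq4I)
    apply (simp_all add: mult4_index proj_def v1 v2 U' del: index_mult_mat(1))
    apply (simp_all add: u'[simplified] algebra_simps)
    done
qed

abbreviation "Uc \<theta> \<phi> \<alpha> \<beta> \<equiv> Ug (complex_of_real (cos \<theta>)) (complex_of_real (sin \<theta>)) (complex_of_real (cos \<alpha>))
   (complex_of_real (sin \<alpha>)) (complex_of_real (cos \<phi>)) (complex_of_real (sin \<phi>)) (cis \<beta>)"

lemma cs1: "complex_of_real (cos t) * complex_of_real (cos t) + complex_of_real (sin t) * complex_of_real (sin t) = 1"
  by (metis of_real_1 of_real_add of_real_mult sin_cos_squared_add3)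

lemma cis1: "cnj (cis b) * cis b = 1" by (simp add: cis_cnj cis_mult)

lemma Uc_unitary: "adjoint_mat (Uc \<theta> \<phi> \<alpha> \<beta>) * Uc \<theta> \<phi> \<alpha> \<beta> = 1\<^sub>m 4"
  by (rule Ug_unitary) (simp_all add: cs1 cis1)

lemma canon_decomp: "canon_state \<theta> \<phi> \<alpha> \<beta> \<nu>1 \<nu>2 =
  Uc \<theta> \<phi> \<alpha> \<beta> * dmat 4 (\<lambda>i. if i = 0 then \<nu>1 else if i = 1 then \<nu>2 else 0) * adjoint_mat (Uc \<theta> \<phi> \<alpha> \<beta>)"
  unfolding canon_state_def
  by (rule rho_gen) (auto simp: psi1_def psi2_def ket_def Ug_def less4)

definition Wm :: "real \<Rightarrow> real \<Rightarrow> complex \<Rightarrow> complex mat" where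
  "Wm x y F = m4 (of_real x) (- of_real y) 0 0 (F * of_real y) (F * of_real x) 0 0 0 0 1 0 0 0 0 1"

lemma Wm_carrier[simp]: "Wm x y F \<in> carrier_mat 4 4" by (simp add: Wm_def)
lemma Wm_dims[simp]: "dim_row (Wm x y F) = 4" "dim_col (Wm x y F) = 4" by (simp_all add: Wm_def)

lemma Wm_unitary: assumes xy: "x * x + y * y = 1" and F: "cnj F * F = 1"
  shows "adjoint_mat (Wm x y F) * Wm x y F = 1\<^sub>m 4"
proof -
  have xy': "complex_of_real x * complex_of_real x + complex_of_real y * complex_of_real y = 1"
    by (metis of_real_1 of_real_add of_real_mult xy)
  show ?thesis
    apply (rule eq4I)
    apply (simp_all add: mult4_index Wm_def del: index_mult_mat(1))
    apply (insert xy' F)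
    apply ((simp add: add.commute; fail) | Groebner_Basis.algebra)+
    done
qed

lemma Wm_decomp: "Wm x y F * dmat 4 (\<lambda>i. if i = 0 then l1 else if i = 1 then l2 else 0) * transpose_mat (Wm x y F) =
  m4 (of_real (x*x*l1 + y*y*l2)) (F * of_real (x*y*(l1-l2))) 0 0 (F * of_real (x*y*(l1-l2))) (F*F*of_real (y*y*l1 + x*x*l2)) 0 0
     0 0 0 0 0 0 0 0"
  apply (rule eq4I)
  apply (simp_all add: mult4_index Wm_def del: index_mult_mat(1))
  apply (simp_all add: algebra_simps)
  done

lemma dmat_one: "1\<^sub>m 4 * dmat 4 lam * transpose_mat (1\<^sub>m 4) = dmat 4 lam"
  by (rule eq_matI) auto

lemma absdiff: fixes l1 l2 :: real assumes p: "l1 * l2 \<le> 0" shows "\<bar>\<bar>l1\<bar> - \<bar>l2\<bar>\<bar> = \<bar>l1 + l2\<bar>"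
proof -
  consider "0 < l1" | "l1 = 0" | "l1 < 0" by linarith
  thus ?thesis
  proof cases
    case 1
    have "l2 \<le> 0" using 1 p by (metis mult_pos_pos not_le)
    thus ?thesis using 1 by arith
  next
    case 2 thus ?thesis by simp
  next
    case 3
    have "0 \<le> l2" using 3 p by (metis mult_neg_neg not_le)
    thus ?thesis using 3 by arith
  qed
qed

lemma sqrt_sq_c: "0 \<le> x \<Longrightarrow> complex_of_real (sqrt x) * complex_of_real (sqrt x) = complex_of_real x"
  by (metis of_real_mult real_sqrt_mult_self abs_of_nonneg)

lemma adjoint_one[simp]: "adjoint_mat (1\<^sub>m n) = 1\<^sub>m n" by (rule eq_matI) auto

lemma case1:
  fixes \<theta> \<phi> \<alpha> \<beta> \<nu>1 \<nu>2 :: real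
  assumes t: "0 \<le> \<theta>" "\<theta> \<le> pi / 2" and a: "0 \<le> \<alpha>" "\<alpha> \<le> pi / 2"
    and n: "0 \<le> \<nu>1" "0 \<le> \<nu>2" and p: "\<phi> = 0"
  shows "concurrence (canon_state \<theta> \<phi> \<alpha> \<beta> \<nu>1 \<nu>2) = \<bar>\<nu>2 * sin (2 * \<alpha>) - \<nu>1 * sin (2 * \<theta>)\<bar>"
proof -
  define g where "g = (\<lambda>i::nat. if i = 0 then \<nu>1 else if i = 1 then \<nu>2 else 0)"
  have g0: "\<And>i. 0 \<le> g i" using n by (simp add: g_def)
  define lam where "lam = (\<lambda>i::nat. if i = 0 then -(\<nu>1 * sin (2 * \<theta>)) else if i = 1 then \<nu>2 * sin (2 * \<alpha>) else 0)"
  define U where "U = Uc \<theta> \<phi> \<alpha> \<beta>"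
  have rho: "canon_state \<theta> \<phi> \<alpha> \<beta> \<nu>1 \<nu>2 = U * dmat 4 g * adjoint_mat U"
    unfolding U_def g_def by (rule canon_decomp)
  have K: "dmat 4 (\<lambda>i. sqrt (g i)) * adjoint_mat U * Smat * conj_mat U * dmat 4 (\<lambda>i. sqrt (g i))
     = 1\<^sub>m 4 * dmat 4 lam * transpose_mat (1\<^sub>m 4)"
    unfolding dmat_one U_def
    apply (subst K0_gen)
    apply (simp_all add: g_def)
    apply (rule eq4I)
    apply (simp_all add: lam_def p sqrt_sq_c n sin_double)
    done
  have cp: "char_poly (msqrt (msqrt (canon_state \<theta> \<phi> \<alpha> \<beta> \<nu>1 \<nu>2) * spin_flip (canon_state \<theta> \<phi> \<alpha> \<beta> \<nu>1 \<nu>2) * msqrt (canon_state \<theta> \<phi> \<alpha> \<beta> \<nu>1 \<nu>2))) =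
         prod_list (map (\<lambda>i. [:- complex_of_real \<bar>lam i\<bar>, 1:]) [0..<4])"
    by (rule reduction[OF _ _ one_carrier_mat _ g0 rho K]) (simp_all add: U_def Uc_unitary)
  have c: "concurrence (canon_state \<theta> \<phi> \<alpha> \<beta> \<nu>1 \<nu>2) = \<bar>\<bar>lam 0\<bar> - \<bar>lam 1\<bar>\<bar>"
    by (rule conc_from[OF cp]) (simp_all add: lam_def)
  have s1: "0 \<le> sin (2 * \<theta>)" using t by (intro sin_ge_zero) auto
  have s2: "0 \<le> sin (2 * \<alpha>)" using a by (intro sin_ge_zero) auto
  show ?thesis unfolding c using s1 s2 n by (simp add: lam_def abs_mult abs_minus_commute)
qed


lemma K23:
  fixes \<theta> \<phi> \<alpha> \<beta> \<nu>1 \<nu>2 x y l1 l2 :: real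
  assumes hz: "cos \<phi> = 0 \<or> cos \<alpha> = 0 \<or> sin \<alpha> = 0" and n: "0 \<le> \<nu>1" "0 \<le> \<nu>2"
    and ea: "x*x*l1 + y*y*l2 = -(\<nu>1 * sin (2 * \<theta>))"
    and eb: "x*y*(l1-l2) = sqrt \<nu>1 * sqrt \<nu>2 * sin \<phi> * cos (2 * \<theta>)"
    and ed: "y*y*l1 + x*x*l2 = \<nu>2 * (sin \<phi>)^2 * sin (2 * \<theta>)"
  shows "dmat 4 (\<lambda>i. sqrt (if i = 0 then \<nu>1 else if i = 1 then \<nu>2 else 0)) * adjoint_mat (Uc \<theta> \<phi> \<alpha> \<beta>) * Smat * conj_mat (Uc \<theta> \<phi> \<alpha> \<beta>)
     * dmat 4 (\<lambda>i. sqrt (if i = 0 then \<nu>1 else if i = 1 then \<nu>2 else 0))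
    = Wm x y (cnj (cis \<beta>)) * dmat 4 (\<lambda>i. if i = 0 then l1 else if i = 1 then l2 else 0) * transpose_mat (Wm x y (cnj (cis \<beta>)))"
  unfolding Wm_decomp ea eb ed
  apply (subst K0_gen)
  apply simp_all
  apply (rule eq4I)
  apply (simp_all add: sqrt_sq_c n sin_double cos_double power2_eq_square)
  using hz apply (auto simp: algebra_simps)
  done


lemma case23:
  fixes \<theta> \<phi> \<alpha> \<beta> \<nu>1 \<nu>2 :: real
  assumes t: "0 \<le> \<theta>" "\<theta> \<le> pi / 2" and n: "0 \<le> \<nu>1" "0 \<le> \<nu>2"
    and hz: "cos \<phi> = 0 \<or> cos \<alpha> = 0 \<or> sin \<alpha> = 0"
  shows "concurrence (canon_state \<theta> \<phi> \<alpha> \<beta> \<nu>1 \<nu>2) = sin (2 * \<theta>) * \<bar>\<nu>1 - \<nu>2 * (sin \<phi>)\<^sup>2\<bar>"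
proof -
  define g where "g = (\<lambda>i::nat. if i = 0 then \<nu>1 else if i = 1 then \<nu>2 else 0)"
  have g0: "\<And>i. 0 \<le> g i" using n by (simp add: g_def)
  define a where "a = -(\<nu>1 * sin (2 * \<theta>))"
  define b where "b = sqrt \<nu>1 * sqrt \<nu>2 * sin \<phi> * cos (2 * \<theta>)"
  define d where "d = \<nu>2 * (sin \<phi>)^2 * sin (2 * \<theta>)"
  obtain x y l1 l2 where xy: "x * x + y * y = 1" and ea: "a = x * x * l1 + y * y * l2"
    and eb: "b = x * y * (l1 - l2)" and ed: "d = y * y * l1 + x * x * l2"
    using diag2[of a b d] by blast
  define lam where "lam = (\<lambda>i::nat. if i = 0 then l1 else if i = 1 then l2 else 0)"
  define U where "U = Uc \<theta> \<phi> \<alpha> \<beta>"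
  define W where "W = Wm x y (cnj (cis \<beta>))"
  have rho: "canon_state \<theta> \<phi> \<alpha> \<beta> \<nu>1 \<nu>2 = U * dmat 4 g * adjoint_mat U"
    unfolding U_def g_def by (rule canon_decomp)
  have K: "dmat 4 (\<lambda>i. sqrt (g i)) * adjoint_mat U * Smat * conj_mat U * dmat 4 (\<lambda>i. sqrt (g i))
     = W * dmat 4 lam * transpose_mat W"
    unfolding U_def W_def g_def lam_def
    by (rule K23[OF hz n]) (use ea eb ed in \<open>simp_all add: a_def b_def d_def\<close>)
  have Wu: "adjoint_mat W * W = 1\<^sub>m 4" unfolding W_def
    by (rule Wm_unitary[OF xy]) (simp add: cis_cnj cis_mult)
  have cp: "char_poly (msqrt (msqrt (canon_state \<theta> \<phi> \<alpha> \<beta> \<nu>1 \<nu>2) * spin_flip (canon_state \<theta> \<phi> \<alpha> \<beta> \<nu>1 \<nu>2) * msqrt (canon_state \<theta> \<phi> \<alpha> \<beta> \<nu>1 \<nu>2))) =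
         prod_list (map (\<lambda>i. [:- complex_of_real \<bar>lam i\<bar>, 1:]) [0..<4])"
    by (rule reduction[OF _ _ _ Wu g0 rho K]) (simp_all add: U_def Uc_unitary W_def)
  have c: "concurrence (canon_state \<theta> \<phi> \<alpha> \<beta> \<nu>1 \<nu>2) = \<bar>\<bar>l1\<bar> - \<bar>l2\<bar>\<bar>"
    using conc_from[OF cp] by (simp add: lam_def)
  have sum: "l1 + l2 = a + d"
  proof -
    have "a + d = (x * x + y * y) * (l1 + l2)" unfolding ea ed by (simp add: algebra_simps)
    thus ?thesis using xy by simp
  qed
  have prod1: "a * d - b * b = l1 * l2 * (x * x + y * y) * (x * x + y * y)"
    unfolding ea eb ed by (simp add: algebra_simps)
  have prod2: "a * d - b * b = - (\<nu>1 * \<nu>2 * (sin \<phi>)^2)"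
  proof -
    have sq: "sqrt \<nu>1 * sqrt \<nu>1 = \<nu>1" "sqrt \<nu>2 * sqrt \<nu>2 = \<nu>2" using n by (simp_all add: real_sqrt_mult_self)
    have bb: "b * b = (sqrt \<nu>1 * sqrt \<nu>1) * (sqrt \<nu>2 * sqrt \<nu>2) * ((sin \<phi>)^2 * (cos (2 * \<theta>))^2)"
      by (simp add: b_def power2_eq_square mult_ac)
    have ad: "a * d = - (\<nu>1 * \<nu>2 * ((sin \<phi>)^2 * (sin (2 * \<theta>))^2))"
      by (simp add: a_def d_def power2_eq_square mult_ac)
    have e: "(sin (2 * \<theta>))^2 = 1 - (cos (2 * \<theta>))^2" by (simp add: sin_squared_eq)
    show ?thesis unfolding ad bb sq e by (simp add: algebra_simps)
  qed
  have "0 \<le> \<nu>1 * \<nu>2 * (sin \<phi>)\<^sup>2" using n by simp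
  hence "l1 * l2 \<le> 0" using prod1 prod2 xy by simp
  hence "concurrence (canon_state \<theta> \<phi> \<alpha> \<beta> \<nu>1 \<nu>2) = \<bar>a + d\<bar>" unfolding c sum[symmetric] by (rule absdiff)
  also have "a + d = sin (2 * \<theta>) * (\<nu>2 * (sin \<phi>)\<^sup>2 - \<nu>1)" by (simp add: a_def d_def algebra_simps)
  also have "\<bar>\<dots>\<bar> = sin (2 * \<theta>) * \<bar>\<nu>1 - \<nu>2 * (sin \<phi>)\<^sup>2\<bar>"
  proof -
    have "0 \<le> sin (2 * \<theta>)" using t by (intro sin_ge_zero) auto
    thus ?thesis by (simp add: abs_mult abs_minus_commute)
  qed
  finally show ?thesis .
qed

theorem mainTheorem3:
  fixes \<theta> \<phi> \<alpha> \<beta> \<nu>1 \<nu>2 :: real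
  assumes "0 \<le> \<theta>" "\<theta> \<le> pi / 2" "0 \<le> \<phi>" "\<phi> \<le> pi / 2" "0 \<le> \<alpha>" "\<alpha> \<le> pi / 2"
    and "0 \<le> \<beta>" "\<beta> \<le> 2 * pi"
    and "0 \<le> \<nu>1" "\<nu>1 \<le> 1" "0 \<le> \<nu>2" "\<nu>2 \<le> 1" "\<nu>1 + \<nu>2 = 1"
  defines "\<rho> \<equiv> canon_state \<theta> \<phi> \<alpha> \<beta> \<nu>1 \<nu>2"
  shows "(\<phi> = 0 \<longrightarrow> concurrence \<rho> = \<bar>\<nu>2 * sin (2 * \<alpha>) - \<nu>1 * sin (2 * \<theta>)\<bar>)
       \<and> (\<phi> = pi / 2 \<longrightarrow> concurrence \<rho> = \<bar>\<nu>1 - \<nu>2\<bar> * sin (2 * \<theta>))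
       \<and> (sin (2 * \<alpha>) = 0 \<longrightarrow> concurrence \<rho> = sin (2 * \<theta>) * \<bar>\<nu>1 - \<nu>2 * (sin \<phi>)\<^sup>2\<bar>)"
proof (intro conjI impI)
  assume "\<phi> = 0"
  thus "concurrence \<rho> = \<bar>\<nu>2 * sin (2 * \<alpha>) - \<nu>1 * sin (2 * \<theta>)\<bar>"
    unfolding \<rho>_def using assms(1,2,5,6,9,11) by (intro case1) auto
next
  assume p: "\<phi> = pi / 2"
  have cp0: "cos \<phi> = 0" unfolding p by (rule cos_pi_half)
  have "concurrence \<rho> = sin (2 * \<theta>) * \<bar>\<nu>1 - \<nu>2 * (sin \<phi>)\<^sup>2\<bar>"
    unfolding \<rho>_def using assms(1,2,9,11) cp0 by (intro case23) auto
  thus "concurrence \<rho> = \<bar>\<nu>1 - \<nu>2\<bar> * sin (2 * \<theta>)" using p by simp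
next
  assume s: "sin (2 * \<alpha>) = 0"
  hence "cos \<alpha> = 0 \<or> sin \<alpha> = 0" by (auto simp: sin_double)
  thus "concurrence \<rho> = sin (2 * \<theta>) * \<bar>\<nu>1 - \<nu>2 * (sin \<phi>)\<^sup>2\<bar>"
    unfolding \<rho>_def using assms(1,2,9,11) by (intro case23) auto
qed

end
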